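(* Let $d\ge 2$, let $M_{c^*}:\mathbb{R}^d\to\mathbb{R}$ be an affine function (the margin of a linear classification model, as defined in the context) with $\nabla M_{c^*}\neq 0$, and let $z\in\mathbb{R}^d$ satisfy $M_{c^*}(z)>0$. Fix $\delta\in(0,1)$ and, for a radius $R>0$, let $$\mathbb{E}\big[\widehat{\nabla M_{c^*}}(z,R)\big]:=\mathbb{E}_u\big[\Phi_{c^*}(z+\delta R u)\,u\big],$$ where $u$ is uniformly distributed on the unit sphere of $\mathbb{R}^d$. Then $$\cos\angle\Big(\mathbb{E}\big[\widehat{\nabla M_{c^*}}(z,R)\big],\ \nabla M_{c^*}(z)\Big)\ \ge\ 1-\mathcal{O}\!\left(\frac{M_{c^*}(z)^2\,(d-1)^2}{\delta^2R^2\,\|\nabla M_{c^*}(z)\|_2^2}\right),$$ and consequently $$\lim_{R\to\infty}\cos\angle\Big(\mathbb{E}\big[\widehat{\nabla M_{c^*}}(z,R)\big],\ \nabla M_{c^*}(z)\Big)=1.$$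
   Context: A classifier $f$ has class scores $f_c$ for $c$ in a finite label set $C$, and $c^*\in C$ is a target class. The margin is $M_{c^*}(z)=f_{c^*}(z)-\max_{c\neq c^*}f_c(z)$ (in the paper $z$ is a latent vector fed through a generator; here $M_{c^*}$ is regarded directly as a function of $z\in\mathbb{R}^d$). "Linear classification model" means $M_{c^*}$ is affine in $z$, so its first-order Taylor expansion is exact. $\mathrm{sign}(t)=1$ if $t>0$ and $-1$ otherwise, and $\Phi_{c^*}(z)=(\mathrm{sign}(M_{c^*}(z))-1)/2$, i.e. $\Phi_{c^*}(z)=0$ if $z$ is classified as $c^*$ ($M_{c^*}(z)>0$) and $-1$ otherwise. The label-only gradient estimator is $\widehat{M_{c^*}}(z,R)=\frac1N\sum_{n=1}^N\Phi_{c^*}(z+Ru_n)u_n$ with $u_n$ sampled uniformly on a sphere; its expectation is the quantity in the claim. $\angle(a,b)$ is the angle between vectors $a,b$. The $\mathcal{O}$ is as $R$ varies with $z$, $d$, $\delta$ and $M_{c^*}$ fixed. *)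

theory Defs
  imports "HOL-Analysis.Analysis"
begin

definition sign :: "real \<Rightarrow> real" where
  "sign t = (if t > 0 then 1 else -1)"

definition Phi :: "('a \<Rightarrow> real) \<Rightarrow> 'a \<Rightarrow> real" where
  "Phi M z = (sign (M z) - 1) / 2"

text \<open>Uniform (normalised surface) distribution on the unit sphere of a Euclidean
  space, realised as the radial projection of the uniform distribution on the unit
  ball (the cone measure, which coincides with normalised surface measure on the sphere).\<close>
definition unif_sphere :: "'a::euclidean_space measure" where
  "unif_sphere = distr (uniform_measure lborel (ball 0 1)) borel (\<lambda>x. x /\<^sub>R norm x)"

definition exp_grad_est :: "('a::euclidean_space \<Rightarrow> real) \<Rightarrow> 'a \<Rightarrow> real \<Rightarrow> real \<Rightarrow> 'a" where
  "exp_grad_est M z \<delta> R = integral\<^sup>L unif_sphere (\<lambda>u. Phi M (z + (\<delta> * R) *\<^sub>R u) *\<^sub>R u)"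

definition cos_angle :: "'a::real_inner \<Rightarrow> 'a \<Rightarrow> real" where
  "cos_angle x y = inner x y / (norm x * norm y)"

end

theory Submission
  imports Defs "HOL-Probability.Probability"
begin

lemma nn_transl:
  fixes h :: "'a::euclidean_space \<Rightarrow> ennreal"
  assumes [measurable]: "h \<in> borel_measurable borel"
  shows "(\<integral>\<^sup>+y. h (c + y) \<partial>lborel) = (\<integral>\<^sup>+y. h y \<partial>lborel)"
proof -
  have "(\<integral>\<^sup>+y. h y \<partial>lborel) = (\<integral>\<^sup>+y. h y \<partial>distr lborel borel ((+) c))"
    by (simp add: lborel_distr_plus)
  also have "\<dots> = (\<integral>\<^sup>+y. h (c + y) \<partial>lborel)"
    by (subst nn_integral_distr) auto
  finally show ?thesis ..
qed

lemma nn_refl: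
  fixes h :: "'a::euclidean_space \<Rightarrow> ennreal"
  assumes [measurable]: "h \<in> borel_measurable borel"
  shows "(\<integral>\<^sup>+y. h (c - y) \<partial>lborel) = (\<integral>\<^sup>+y. h y \<partial>lborel)"
proof -
  have e: "lborel = density (distr lborel borel (\<lambda>x. c + (-1::real) *\<^sub>R x)) (\<lambda>_. \<bar>-1::real\<bar>^DIM('a))"
    by (rule lborel_affine) simp
  have "(\<integral>\<^sup>+y. h y \<partial>lborel) = (\<integral>\<^sup>+y. h y \<partial>distr lborel borel (\<lambda>x. c + (-1::real) *\<^sub>R x))"
    by (subst e) (simp add: density_1)
  also have "\<dots> = (\<integral>\<^sup>+y. h (c - y) \<partial>lborel)"
    by (subst nn_integral_distr) auto
  finally show ?thesis ..
qed

lemma swap_lemma: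
  fixes f g :: "'a::euclidean_space \<Rightarrow> 'a" and h1 h2 :: "'a \<Rightarrow> ennreal"
  assumes lf: "linear f" and fg: "\<And>x. f (g x) = x"
    and [measurable]: "h1 \<in> borel_measurable borel" "h2 \<in> borel_measurable borel"
  shows "(\<integral>\<^sup>+x. h1 (f x) \<partial>lborel) * (\<integral>\<^sup>+y. h2 y \<partial>lborel)
       = (\<integral>\<^sup>+x. h2 (f x) \<partial>lborel) * (\<integral>\<^sup>+y. h1 y \<partial>lborel)"
proof -
  have [measurable]: "f \<in> borel_measurable borel"
    by (intro borel_measurable_continuous_onI linear_continuous_on) (simp add: lf linear_conv_bounded_linear[symmetric])
  have "(\<integral>\<^sup>+x. h1 (f x) \<partial>lborel) * (\<integral>\<^sup>+y. h2 y \<partial>lborel)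
      = (\<integral>\<^sup>+x. h1 (f x) * (\<integral>\<^sup>+y. h2 y \<partial>lborel) \<partial>lborel)"
    by (simp add: nn_integral_multc)
  also have "\<dots> = (\<integral>\<^sup>+x. (\<integral>\<^sup>+y. h1 (f x) * h2 (f x + y) \<partial>lborel) \<partial>lborel)"
    by (intro nn_integral_cong) (simp add: nn_integral_cmult nn_transl)
  also have "\<dots> = (\<integral>\<^sup>+y. (\<integral>\<^sup>+x. h1 (f x) * h2 (f x + y) \<partial>lborel) \<partial>lborel)"
    by (rule lborel_pair.Fubini'[symmetric]) measurable
  also have "\<dots> = (\<integral>\<^sup>+y. (\<integral>\<^sup>+x. h1 (f x - y) * h2 (f x) \<partial>lborel) \<partial>lborel)"
  proof (rule nn_integral_cong)
    fix y :: 'a assume "y \<in> space lborel"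
    have eq: "f (g (- y) + x) = f x - y" for x
      using lf fg by (simp add: linear_add)
    have "(\<integral>\<^sup>+x. h1 (f x) * h2 (f x + y) \<partial>lborel)
        = (\<integral>\<^sup>+x. h1 (f (g (-y) + x)) * h2 (f (g (-y) + x) + y) \<partial>lborel)"
      by (rule nn_transl[symmetric, where h="\<lambda>x. h1 (f x) * h2 (f x + y)"]) measurable
    also have "\<dots> = (\<integral>\<^sup>+x. h1 (f x - y) * h2 (f x) \<partial>lborel)"
      by (simp add: eq)
    finally show "(\<integral>\<^sup>+x. h1 (f x) * h2 (f x + y) \<partial>lborel) = (\<integral>\<^sup>+x. h1 (f x - y) * h2 (f x) \<partial>lborel)" .
  qed
  also have "\<dots> = (\<integral>\<^sup>+x. (\<integral>\<^sup>+y. h1 (f x - y) * h2 (f x) \<partial>lborel) \<partial>lborel)"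
    by (rule lborel_pair.Fubini') measurable
  also have "\<dots> = (\<integral>\<^sup>+x. h2 (f x) * (\<integral>\<^sup>+y. h1 y \<partial>lborel) \<partial>lborel)"
  proof (rule nn_integral_cong)
    fix x :: 'a
    have "(\<integral>\<^sup>+y. h1 (f x - y) * h2 (f x) \<partial>lborel) = (\<integral>\<^sup>+y. h1 (f x - y) \<partial>lborel) * h2 (f x)"
      by (rule nn_integral_multc) measurable
    then show "(\<integral>\<^sup>+y. h1 (f x - y) * h2 (f x) \<partial>lborel) = h2 (f x) * (\<integral>\<^sup>+y. h1 y \<partial>lborel)"
      by (simp add: nn_refl mult.commute)
  qed
  also have "\<dots> = (\<integral>\<^sup>+x. h2 (f x) \<partial>lborel) * (\<integral>\<^sup>+y. h1 y \<partial>lborel)"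
    by (simp add: nn_integral_multc)
  finally show ?thesis .
qed

lemma ball_emeasure_pos:
  fixes c :: "'a::euclidean_space"
  assumes "0 < r"
  shows "emeasure lborel (ball c r) \<noteq> 0" "emeasure lborel (ball c r) \<noteq> \<infinity>"
proof -
  have fin: "emeasure lborel (ball c r) \<noteq> \<infinity>"
    using emeasure_lborel_ball_finite[of c r] by simp
  then show "emeasure lborel (ball c r) \<noteq> \<infinity>" .
  have "emeasure lborel (ball c r) = ennreal (measure lborel (ball c r))"
    using fin by (simp add: emeasure_eq_ennreal_measure)
  moreover have "measure lborel (ball c r) > 0" using assms content_ball_gt_0_iff by blast
  ultimately show "emeasure lborel (ball c r) \<noteq> 0" by simp
qed

lemma lborel_orth_inv:
  fixes f g :: "'a::euclidean_space \<Rightarrow> 'a"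
  assumes lf: "linear f" and fg: "\<And>x. f (g x) = x" and nf: "\<And>x. norm (f x) = norm x"
  shows "distr lborel borel f = lborel"
proof (rule measure_eqI)
  show "sets (distr lborel borel f) = sets lborel" by simp
  have [measurable]: "f \<in> borel_measurable borel"
    by (intro borel_measurable_continuous_onI linear_continuous_on) (simp add: lf linear_conv_bounded_linear[symmetric])
  fix A assume "A \<in> sets (distr lborel borel f)"
  then have A[measurable]: "A \<in> sets borel" by simp
  let ?B = "ball (0::'a) 1"
  have em: "emeasure (distr lborel borel f) S = (\<integral>\<^sup>+x. indicator S (f x) \<partial>lborel)" if [measurable]: "S \<in> sets borel" for S
  proof -
    have "emeasure (distr lborel borel f) S = emeasure lborel (f -` S)"
      by (subst emeasure_distr) auto
    also have "\<dots> = (\<integral>\<^sup>+x. indicator (f -` S) x \<partial>lborel)"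
      using measurable_sets[of f borel borel S] by (subst nn_integral_indicator) auto
    finally show ?thesis by (simp add: indicator_def)
  qed
  have sw: "(\<integral>\<^sup>+x. indicator A (f x) \<partial>lborel) * (\<integral>\<^sup>+y. indicator ?B y \<partial>lborel)
       = (\<integral>\<^sup>+x. indicator ?B (f x) \<partial>lborel) * (\<integral>\<^sup>+y. indicator A y \<partial>lborel)"
    by (rule swap_lemma[OF lf fg]) (auto intro: borel_measurable_indicator)
  have "(\<lambda>x. indicator ?B (f x) :: ennreal) = indicator ?B"
    by (rule ext) (simp add: indicator_def nf)
  then have sw2: "emeasure (distr lborel borel f) A * emeasure lborel ?B = emeasure lborel A * emeasure lborel ?B"
    using sw by (simp add: em mult.commute)
  have "emeasure (distr lborel borel f) A = emeasure (distr lborel borel f) A * emeasure lborel ?B / emeasure lborel ?B"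
    using ball_emeasure_pos[of 1 "0::'a"] by (simp add: ennreal_mult_divide_eq)
  also have "\<dots> = emeasure lborel A"
    using ball_emeasure_pos[of 1 "0::'a"] sw2 by (simp add: ennreal_mult_divide_eq)
  finally show "emeasure (distr lborel borel f) A = emeasure lborel A" .
qed

lemma lin_meas:
  fixes f :: "'a::euclidean_space \<Rightarrow> 'a"
  assumes "linear f" shows "f \<in> borel_measurable borel"
  by (intro borel_measurable_continuous_onI linear_continuous_on) (simp add: assms linear_conv_bounded_linear[symmetric])

lemma unif_ball_inv:
  fixes f g :: "'a::euclidean_space \<Rightarrow> 'a"
  assumes lf: "linear f" and fg: "\<And>x. f (g x) = x" and nf: "\<And>x. norm (f x) = norm x"
  shows "distr (uniform_measure lborel (ball 0 1)) borel f = uniform_measure lborel (ball 0 1)"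
proof (rule measure_eqI)
  show "sets (distr (uniform_measure lborel (ball 0 1)) borel f) = sets (uniform_measure lborel (ball 0 1))"
    by simp
  have [measurable]: "f \<in> borel_measurable borel" by (rule lin_meas[OF lf])
  fix S assume "S \<in> sets (distr (uniform_measure lborel (ball 0 1)) borel f)"
  then have S[measurable]: "S \<in> sets borel" by simp
  have fS: "f -` S \<in> sets borel"
    using measurable_sets[of f borel borel S] by simp
  have fBS: "f -` (ball 0 1 \<inter> S) \<in> sets borel"
    using measurable_sets[of f borel borel "ball 0 1 \<inter> S"] by simp
  have eqs: "ball 0 1 \<inter> f -` S = f -` (ball 0 1 \<inter> S)"
    by (auto simp: nf)
  have "emeasure (distr (uniform_measure lborel (ball 0 1)) borel f) S
      = emeasure (uniform_measure lborel (ball 0 1)) (f -` S)"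
    by (subst emeasure_distr) auto
  also have "\<dots> = emeasure lborel (ball 0 1 \<inter> f -` S) / emeasure lborel (ball (0::'a) 1)"
    using fS by simp
  also have "emeasure lborel (ball 0 1 \<inter> f -` S) = emeasure (distr lborel borel f) (ball 0 1 \<inter> S)"
    unfolding eqs by (subst emeasure_distr) auto
  also have "\<dots> = emeasure lborel (ball 0 1 \<inter> S)"
    by (simp add: lborel_orth_inv[OF lf fg nf])
  also have "emeasure lborel (ball 0 1 \<inter> S) / emeasure lborel (ball (0::'a) 1)
      = emeasure (uniform_measure lborel (ball 0 1)) S"
    by (subst emeasure_uniform_measure) auto
  finally show "emeasure (distr (uniform_measure lborel (ball 0 1)) borel f) S
      = emeasure (uniform_measure lborel (ball 0 1)) S" .
qed

lemma unif_sphere_inv: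
  fixes f g :: "'a::euclidean_space \<Rightarrow> 'a"
  assumes lf: "linear f" and fg: "\<And>x. f (g x) = x" and nf: "\<And>x. norm (f x) = norm x"
  shows "distr unif_sphere borel f = unif_sphere"
proof -
  have [measurable]: "f \<in> borel_measurable borel" by (rule lin_meas[OF lf])
  have nm[measurable]: "(\<lambda>x::'a. x /\<^sub>R norm x) \<in> borel_measurable borel" by measurable
  have comm: "f \<circ> (\<lambda>x. x /\<^sub>R norm x) = (\<lambda>x. x /\<^sub>R norm x) \<circ> f"
    by (rule ext) (simp add: nf linear_scale[OF lf])
  have "distr unif_sphere borel f
      = distr (uniform_measure lborel (ball 0 1)) borel (f \<circ> (\<lambda>x. x /\<^sub>R norm x))"
    unfolding unif_sphere_def by (subst distr_distr) auto
  also have "\<dots> = distr (distr (uniform_measure lborel (ball 0 1)) borel f) borel (\<lambda>x. x /\<^sub>R norm x)"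
    unfolding comm by (subst distr_distr) auto
  also have "\<dots> = unif_sphere"
    unfolding unif_sphere_def unif_ball_inv[OF lf fg nf] ..
  finally show ?thesis .
qed

lemma sets_unif_sphere[simp, measurable_cong]: "sets unif_sphere = sets borel"
  by (simp add: unif_sphere_def)

lemma space_unif_sphere[simp]: "space unif_sphere = UNIV"
  by (simp add: unif_sphere_def)

lemma prob_unif_sphere: "prob_space (unif_sphere :: 'a::euclidean_space measure)"
proof -
  have "prob_space (uniform_measure lborel (ball (0::'a) 1))"
    using ball_emeasure_pos[of 1 "0::'a"] by (intro prob_space_uniform_measure) auto
  then show ?thesis unfolding unif_sphere_def
    by (rule prob_space.prob_space_distr) measurable
qed

lemma main_par:
  fixes M :: "'a::euclidean_space \<Rightarrow> real" and a z :: 'a and b s :: real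
  assumes Mdef: "\<And>x. M x = inner a x + b" and a0: "a \<noteq> 0" and Mz: "M z > 0"
    and s0: "s > 0" and ts: "M z / s < norm a"
  shows "\<exists>c>0. integral\<^sup>L unif_sphere (\<lambda>u. Phi M (z + s *\<^sub>R u) *\<^sub>R u) = c *\<^sub>R a"
proof -
  define F where "F u = Phi M (z + s *\<^sub>R u) *\<^sub>R u" for u
  define P where "P u = (2 * (a \<bullet> u) / (a \<bullet> a)) *\<^sub>R a - u" for u
  define E where "E = integral\<^sup>L unif_sphere F"
  have aa: "a \<bullet> a \<noteq> 0" using a0 by simp
  have Meq: "M = (\<lambda>x. a \<bullet> x + b)" by (rule ext) (simp add: Mdef)
  have linP: "linear P"
    by (rule linearI) (auto simp: P_def inner_add_right inner_scaleR_right add_divide_distrib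
        scaleR_add_left algebra_simps)
  have PP: "P (P u) = u" for u
    using aa by (simp add: P_def inner_diff_right inner_scaleR_right algebra_simps)
  have aP: "a \<bullet> P u = a \<bullet> u" for u
    using aa by (simp add: P_def inner_diff_right inner_scaleR_right)
  have nP: "norm (P u) = norm u" for u
  proof -
    have "P u \<bullet> P u = u \<bullet> u"
      using aa by (simp add: P_def inner_diff_right inner_diff_left inner_scaleR_right
          inner_scaleR_left inner_commute power2_eq_square field_simps)
    then show ?thesis by (simp add: norm_eq_sqrt_inner)
  qed
  interpret S: prob_space "unif_sphere :: 'a measure" by (rule prob_unif_sphere)
  have [measurable]: "P \<in> borel_measurable borel" by (rule lin_meas[OF linP])
  have Fmeas[measurable]: "F \<in> borel_measurable borel"
    unfolding F_def Phi_def sign_def Meq by measurable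
  have FP: "F (P u) = P (F u)" for u
  proof -
    have "Phi M (z + s *\<^sub>R P u) = Phi M (z + s *\<^sub>R u)"
      by (simp add: Phi_def Meq inner_add_right aP)
    then show ?thesis by (simp add: F_def linear_scale[OF linP])
  qed
  have "E = integral\<^sup>L (distr unif_sphere borel P) F"
    unfolding E_def unif_sphere_inv[OF linP PP nP] ..
  also have "\<dots> = integral\<^sup>L unif_sphere (\<lambda>u. F (P u))"
    by (rule integral_distr) auto
  also have "\<dots> = integral\<^sup>L unif_sphere (\<lambda>u. P (F u))"
    by (simp add: FP)
  also have "\<dots> = P E"
    unfolding E_def
    by (rule integral_bounded_linear') (use linP PP in \<open>auto simp: linear_conv_bounded_linear[symmetric]\<close>)
  finally have EP: "E = P E" .
  define c where "c = (a \<bullet> E) / (a \<bullet> a)"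
  have Ec: "E = c *\<^sub>R a"
  proof -
    have "E = (2 * (a \<bullet> E) / (a \<bullet> a)) *\<^sub>R a - E" using EP by (simp add: P_def)
    then have "2 *\<^sub>R E = (2 * c) *\<^sub>R a" by (simp add: c_def algebra_simps scaleR_2)
    then show ?thesis by (metis scaleR_cancel_left scaleR_scaleR zero_neq_numeral)
  qed
  define h where "h u = Phi M (z + s *\<^sub>R u) * (a \<bullet> u)" for u
  have [measurable]: "h \<in> borel_measurable borel"
    unfolding h_def Phi_def sign_def Meq by measurable
  have hF: "a \<bullet> F u = h u" for u by (simp add: F_def h_def)
  have h0: "h u \<ge> 0" for u
  proof (cases "M (z + s *\<^sub>R u) > 0")
    case True then show ?thesis by (simp add: h_def Phi_def sign_def)
  next
    case False
    then have "M z + s * (a \<bullet> u) \<le> 0" by (simp add: Mdef inner_add_right)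
    then have "s * (a \<bullet> u) < 0" using Mz by linarith
    then have "a \<bullet> u < 0" using s0 by (simp add: mult_less_0_iff)
    then show ?thesis using False by (simp add: h_def Phi_def sign_def)
  qed
  have nrm[measurable]: "(\<lambda>x::'a. x /\<^sub>R norm x) \<in> borel_measurable borel" by measurable
  have intF: "integrable unif_sphere F"
  proof -
    interpret U: prob_space "uniform_measure lborel (ball (0::'a) 1)"
      using ball_emeasure_pos[of 1 "0::'a"] by (intro prob_space_uniform_measure) auto
    have "integrable (uniform_measure lborel (ball (0::'a) 1)) (\<lambda>x. F (x /\<^sub>R norm x))"
    proof (rule U.integrable_const_bound[where B=1])
      show "AE x in uniform_measure lborel (ball 0 1). norm (F (x /\<^sub>R norm x)) \<le> 1"
      proof (rule AE_I2)
        fix x :: 'a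
        define y where "y = x /\<^sub>R norm x"
        have "norm y \<le> 1" unfolding y_def by (cases "x = 0") auto
        moreover have "\<bar>Phi M (z + s *\<^sub>R y)\<bar> \<le> 1"
          by (simp add: Phi_def sign_def)
        ultimately have "norm (F y) \<le> 1"
          unfolding F_def by (simp only: norm_scaleR) (rule mult_le_one, auto)
        then show "norm (F (x /\<^sub>R norm x)) \<le> 1" by (simp add: y_def)
      qed
    qed measurable
    then show ?thesis unfolding unif_sphere_def
      by (subst integrable_distr_eq) auto
  qed
  have inth: "integrable unif_sphere h"
    using integrable_inner_right[OF intF, of a] by (simp add: hF)
  have aE: "a \<bullet> E = integral\<^sup>L unif_sphere h"
  proof -
    have "integral\<^sup>L unif_sphere (\<lambda>u. a \<bullet> F u) = a \<bullet> integral\<^sup>L unif_sphere F"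
      using intF by (rule integral_inner_right)
    then show ?thesis unfolding E_def hF by (metis hF ext)
  qed
  have notAE: "\<not> (AE u in unif_sphere. h u = 0)"
  proof
    assume "AE u in unif_sphere. h u = 0"
    then have ae: "AE x in uniform_measure lborel (ball (0::'a) 1). h (x /\<^sub>R norm x) = 0"
      unfolding unif_sphere_def by (subst (asm) AE_distr_iff) auto
    define t where "t = M z / s"
    define Ost where "Ost = {x::'a. norm x < 1} \<inter> {x. a \<bullet> x < - t * norm x}"
    have Oopen: "open Ost" unfolding Ost_def
      by (intro open_Int open_Collect_less continuous_intros)
    define x0 where "x0 = (- 1 / (2 * norm a)) *\<^sub>R a"
    have nx0: "norm x0 = 1/2" using a0 by (simp add: x0_def)
    have ax0: "a \<bullet> x0 = - norm a / 2" using a0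
      by (simp add: x0_def power2_norm_eq_inner[symmetric] power2_eq_square)
    have "x0 \<in> Ost" unfolding Ost_def using ts by (simp add: t_def nx0 ax0)
    then obtain e where e: "e > 0" "ball x0 e \<subseteq> Ost"
      using Oopen open_contains_ball by blast
    have Osub: "Ost \<subseteq> {x \<in> space (uniform_measure lborel (ball 0 1)). h (x /\<^sub>R norm x) \<noteq> 0}"
    proof safe
      fix x assume xO: "x \<in> Ost" and hx: "h (x /\<^sub>R norm x) = 0"
      have xn: "x \<noteq> 0" using xO by (auto simp: Ost_def)
      have "a \<bullet> x < - t * norm x" using xO by (simp add: Ost_def)
      moreover have nx: "norm x > 0" using xn by simp
      ultimately have "(a \<bullet> x) / norm x < - t" by (simp add: pos_divide_less_eq[OF nx])
      moreover have "a \<bullet> (x /\<^sub>R norm x) = (a \<bullet> x) / norm x"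
        by (simp add: inner_scaleR_right divide_inverse mult.commute)
      ultimately have lt: "a \<bullet> (x /\<^sub>R norm x) < - t" by simp
      have "M (z + s *\<^sub>R (x /\<^sub>R norm x)) = M z + s * (a \<bullet> (x /\<^sub>R norm x))"
        by (simp add: Mdef inner_add_right del: inner_scaleR_right) (simp only: inner_scaleR_right)
      also have "\<dots> < M z + s * (- t)" using mult_strict_left_mono[OF lt s0] by linarith
      also have "\<dots> = 0" using s0 by (simp add: t_def)
      finally have phi: "Phi M (z + s *\<^sub>R (x /\<^sub>R norm x)) = -1" by (simp add: Phi_def sign_def)
      have tpos: "t > 0" using Mz s0 by (simp add: t_def)
      have neg: "a \<bullet> (x /\<^sub>R norm x) < 0" using lt tpos by linarith
      have "h (x /\<^sub>R norm x) = - (a \<bullet> (x /\<^sub>R norm x))" unfolding h_def phi by simp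
      then show False using hx neg by linarith
    qed simp
    have Omeas[measurable]: "Ost \<in> sets borel" using Oopen by auto
    have z0: "emeasure (uniform_measure lborel (ball 0 1)) {x \<in> space (uniform_measure lborel (ball 0 1)). h (x /\<^sub>R norm x) \<noteq> 0} = 0"
      using ae by (subst (asm) AE_iff_measurable) auto
    then have "emeasure (uniform_measure lborel (ball 0 1)) Ost = 0"
    proof -
      have "emeasure (uniform_measure lborel (ball 0 1)) Ost
         \<le> emeasure (uniform_measure lborel (ball 0 1)) {x \<in> space (uniform_measure lborel (ball 0 1)). h (x /\<^sub>R norm x) \<noteq> 0}"
        by (rule emeasure_mono[OF Osub]) measurable
      then show ?thesis unfolding z0 by (rule antisym) simp
    qed
    then have "emeasure lborel (ball 0 1 \<inter> Ost) / emeasure lborel (ball (0::'a) 1) = 0"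
      by simp
    moreover have "ball 0 1 \<inter> Ost = Ost" by (auto simp: Ost_def)
    ultimately have "emeasure lborel Ost = 0"
      using ball_emeasure_pos[of 1 "0::'a"] by (simp add: ennreal_divide_eq_0_iff)
    moreover have "emeasure lborel (ball x0 e) \<le> emeasure lborel Ost"
      using e by (intro emeasure_mono) auto
    ultimately show False using ball_emeasure_pos[of e x0] e by simp
  qed
  have "a \<bullet> E \<ge> 0" unfolding aE by (rule integral_nonneg_AE) (simp add: h0)
  moreover have "a \<bullet> E \<noteq> 0"
    unfolding aE using notAE integral_nonneg_eq_0_iff_AE[OF inth] h0 by auto
  ultimately have "c > 0" using aa by (simp add: c_def)
  moreover have "(\<lambda>u. Phi M (z + s *\<^sub>R u) *\<^sub>R u) = F" by (rule ext) (simp add: F_def)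
  ultimately show ?thesis using Ec E_def by auto
qed

theorem theorem1:
  fixes M :: "'a::euclidean_space \<Rightarrow> real" and a z :: 'a and b \<delta> :: real
  assumes "DIM('a) \<ge> 2"
    and "\<And>x. M x = inner a x + b"
    and "a \<noteq> 0"
    and "M z > 0"
    and "0 < \<delta>" and "\<delta> < 1"
  shows "(\<exists>C. \<forall>\<^sub>F R in at_top.
            cos_angle (exp_grad_est M z \<delta> R) a
              \<ge> 1 - C * ((M z)\<^sup>2 * (real DIM('a) - 1)\<^sup>2 / (\<delta>\<^sup>2 * R\<^sup>2 * (norm a)\<^sup>2)))
       \<and> ((\<lambda>R. cos_angle (exp_grad_est M z \<delta> R) a) \<longlongrightarrow> 1) at_top"
proof -
  have ev: "\<forall>\<^sub>F R in at_top. cos_angle (exp_grad_est M z \<delta> R) a = 1"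
    using eventually_gt_at_top[of "max 0 (M z / (\<delta> * norm a))"]
  proof (rule eventually_mono)
    fix R assume R: "max 0 (M z / (\<delta> * norm a)) < R"
    then have R0: "R > 0" by simp
    have s0: "\<delta> * R > 0" using R0 assms(5) by simp
    have na: "norm a > 0" using assms(3) by simp
    have "M z / (\<delta> * norm a) < R" using R by simp
    then have "M z < R * (\<delta> * norm a)" using na assms(5) by (simp add: pos_divide_less_eq)
    then have "M z < norm a * (\<delta> * R)" by (simp add: algebra_simps)
    then have ts: "M z / (\<delta> * R) < norm a" using s0 by (simp add: pos_divide_less_eq)
    obtain c where c: "c > 0" and Ec: "exp_grad_est M z \<delta> R = c *\<^sub>R a"
      using main_par[OF assms(2) assms(3) assms(4) s0 ts] unfolding exp_grad_est_def by blast
    have "cos_angle (c *\<^sub>R a) a = (c * (a \<bullet> a)) / ((c * norm a) * norm a)"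
      using c by (simp add: cos_angle_def)
    also have "\<dots> = 1" using c na by (simp add: power2_norm_eq_inner[symmetric] power2_eq_square)
    finally show "cos_angle (exp_grad_est M z \<delta> R) a = 1" by (simp add: Ec)
  qed
  have "\<forall>\<^sub>F R in at_top. cos_angle (exp_grad_est M z \<delta> R) a
              \<ge> 1 - 0 * ((M z)\<^sup>2 * (real DIM('a) - 1)\<^sup>2 / (\<delta>\<^sup>2 * R\<^sup>2 * (norm a)\<^sup>2))"
    using ev by (rule eventually_mono) simp
  moreover have "((\<lambda>R. cos_angle (exp_grad_est M z \<delta> R) a) \<longlongrightarrow> 1) at_top"
    using ev by (rule tendsto_eventually)
  ultimately show ?thesis by blast
qed

end
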